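(* Let $X$ be a uniformly locally finite metric space and $h$ a closed operator on $\ell_2(X)$ whose domain is invariant under partial translations. Then $h$ is a coarse operator if and only if, for every $r>0$, \[ \sup_f\|[h,v_f]\|<\infty, \] the supremum taken over all partial $r$-translations $f$ of $X$.
   Context: Uniformly locally finite: $\sup_x|B_r(x)|<\infty$ for all $r>0$. A partial translation is a bijection $f\colon\mathrm{dom}(f)\subseteq X\to\mathrm{ran}(f)\subseteq X$ with $\sup_{x\in\mathrm{dom}(f)}d(x,f(x))<\infty$; a partial $r$-translation if the supremum is at most $r$. $v_f\delta_x=\delta_{f(x)}$ for $x\in\mathrm{dom}(f)$, $0$ otherwise. The domain is invariant under partial translations if $v_f(\mathrm{dom}(h))\subseteq\mathrm{dom}(h)$ for all partial translations $f$. $[h,v_f]=hv_f-v_fh$ on $\mathrm{dom}(h)$ with possibly infinite norm. A closed operator $h$ is a coarse operator if its domain is invariant under partial translations and $\|[h,v_f]\|<\infty$ for every partial translation $f$. *)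

theory Defs
  imports "HOL-Analysis.Analysis"
begin

text \<open>The metric space X is the whole of a type 'a of class metric_space.
  Vectors of l2(X) are functions 'a => complex that are square summable.\<close>

definition uniformly_locally_finite :: "'a::metric_space itself \<Rightarrow> bool" where
  "uniformly_locally_finite _ \<longleftrightarrow>
     (\<forall>r>0. \<exists>N::nat. \<forall>x::'a. finite (cball x r) \<and> card (cball x r) \<le> N)"

definition ell2 :: "('a \<Rightarrow> complex) set" where
  "ell2 = {\<xi>. (\<lambda>x. (cmod (\<xi> x))\<^sup>2) summable_on UNIV}"

definition l2norm :: "('a \<Rightarrow> complex) \<Rightarrow> real" where
  "l2norm \<xi> = sqrt (infsum (\<lambda>x. (cmod (\<xi> x))\<^sup>2) UNIV)"

text \<open>A (possibly unbounded) operator on l2(X) is given by its domain D and a map h;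
  only the values of h on D matter.\<close>

definition closed_operator :: "('a \<Rightarrow> complex) set \<Rightarrow> (('a \<Rightarrow> complex) \<Rightarrow> ('a \<Rightarrow> complex)) \<Rightarrow> bool" where
  "closed_operator D h \<longleftrightarrow>
     D \<subseteq> ell2 \<and> (\<lambda>x. 0) \<in> D \<and>
     (\<forall>\<xi>\<in>D. \<forall>\<eta>\<in>D. (\<lambda>x. \<xi> x + \<eta> x) \<in> D \<and> h (\<lambda>x. \<xi> x + \<eta> x) = (\<lambda>x. h \<xi> x + h \<eta> x)) \<and>
     (\<forall>c::complex. \<forall>\<xi>\<in>D. (\<lambda>x. c * \<xi> x) \<in> D \<and> h (\<lambda>x. c * \<xi> x) = (\<lambda>x. c * h \<xi> x)) \<and>
     (\<forall>\<xi>\<in>D. h \<xi> \<in> ell2) \<and>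
     (\<forall>\<xi>s \<xi> \<eta>. (\<forall>n. \<xi>s n \<in> D) \<and> \<xi> \<in> ell2 \<and> \<eta> \<in> ell2 \<and>
        (\<lambda>n. l2norm (\<lambda>x. \<xi>s n x - \<xi> x)) \<longlonglongrightarrow> 0 \<and>
        (\<lambda>n. l2norm (\<lambda>x. h (\<xi>s n) x - \<eta> x)) \<longlonglongrightarrow> 0
        \<longrightarrow> \<xi> \<in> D \<and> h \<xi> = \<eta>)"

definition partial_translation :: "'a::metric_space set \<Rightarrow> ('a \<Rightarrow> 'a) \<Rightarrow> bool" where
  "partial_translation A f \<longleftrightarrow> inj_on f A \<and> (\<exists>c. \<forall>x\<in>A. dist x (f x) \<le> c)"

definition partial_r_translation :: "real \<Rightarrow> 'a::metric_space set \<Rightarrow> ('a \<Rightarrow> 'a) \<Rightarrow> bool" where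
  "partial_r_translation r A f \<longleftrightarrow> inj_on f A \<and> (\<forall>x\<in>A. dist x (f x) \<le> r)"

text \<open>The partial isometry v_f: v_f delta_x = delta_(f x) for x in A, 0 otherwise.\<close>

definition vf :: "'a set \<Rightarrow> ('a \<Rightarrow> 'a) \<Rightarrow> ('a \<Rightarrow> complex) \<Rightarrow> ('a \<Rightarrow> complex)" where
  "vf A f \<xi> = (\<lambda>y. if y \<in> f ` A then \<xi> (the_inv_into A f y) else 0)"

definition domain_invariant :: "('a::metric_space \<Rightarrow> complex) set \<Rightarrow> bool" where
  "domain_invariant D \<longleftrightarrow> (\<forall>A f. partial_translation A f \<longrightarrow> vf A f ` D \<subseteq> D)"

definition comm_norm :: "('a \<Rightarrow> complex) set \<Rightarrow> (('a \<Rightarrow> complex) \<Rightarrow> ('a \<Rightarrow> complex))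
    \<Rightarrow> 'a set \<Rightarrow> ('a \<Rightarrow> 'a) \<Rightarrow> ennreal" where
  "comm_norm D h A f =
     (SUP \<xi>\<in>{\<xi>\<in>D. l2norm \<xi> \<le> 1}. ennreal (l2norm (\<lambda>x. h (vf A f \<xi>) x - vf A f (h \<xi>) x)))"

definition coarse_operator :: "('a::metric_space \<Rightarrow> complex) set \<Rightarrow> (('a \<Rightarrow> complex) \<Rightarrow> ('a \<Rightarrow> complex)) \<Rightarrow> bool" where
  "coarse_operator D h \<longleftrightarrow> closed_operator D h \<and> domain_invariant D \<and>
     (\<forall>A f. partial_translation A f \<longrightarrow> comm_norm D h A f < \<infinity>)"

end

theory Submission
  imports Defs
begin


abbreviation sqn :: "('a \<Rightarrow> complex) \<Rightarrow> 'a \<Rightarrow> real" where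
  "sqn \<xi> x \<equiv> (cmod (\<xi> x))\<^sup>2"

lemma l2norm_nonneg: "0 \<le> l2norm \<xi>"
  unfolding l2norm_def by (simp add: infsum_nonneg)

lemma l2norm_sq: "(l2norm \<xi>)\<^sup>2 = infsum (sqn \<xi>) UNIV"
  unfolding l2norm_def by (simp add: infsum_nonneg)

lemma l2norm_sq': "(l2norm \<xi>)\<^sup>2 = infsum (sqn \<xi>) UNIV"
  by (rule l2norm_sq)

lemma ell2_finite_sum: "\<xi> \<in> ell2 \<Longrightarrow> finite G \<Longrightarrow> sum (sqn \<xi>) G \<le> (l2norm \<xi>)\<^sup>2"
  unfolding l2norm_sq ell2_def by (intro finite_sum_le_infsum) auto

lemma ell2_by_finite_sums:
  assumes "\<And>G. finite G \<Longrightarrow> sum (sqn \<xi>) G \<le> B"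
  shows "\<xi> \<in> ell2" "(l2norm \<xi>)\<^sup>2 \<le> B"
proof -
  have s: "sqn \<xi> summable_on UNIV"
    by (rule nonneg_bdd_above_summable_on) (auto intro!: bdd_aboveI assms)
  then show "\<xi> \<in> ell2" unfolding ell2_def by simp
  show "(l2norm \<xi>)\<^sup>2 \<le> B" unfolding l2norm_sq
    by (rule infsum_le_finite_sums[OF s]) (auto intro: assms)
qed

lemma ell2_by_finite_sums':
  assumes "\<And>G. finite G \<Longrightarrow> sum (sqn \<xi>) G \<le> B\<^sup>2" "0 \<le> B"
  shows "\<xi> \<in> ell2" "l2norm \<xi> \<le> B"
  using ell2_by_finite_sums[of \<xi> "B\<^sup>2", OF assms(1)] assms(2)
  by (auto intro: power2_le_imp_le)

lemma L2_le_l2norm: "\<xi> \<in> ell2 \<Longrightarrow> finite G \<Longrightarrow> L2_set (\<lambda>x. cmod (\<xi> x)) G \<le> l2norm \<xi>"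
proof -
  assume a: "\<xi> \<in> ell2" "finite G"
  have "sqrt (sum (sqn \<xi>) G) \<le> sqrt ((l2norm \<xi>)\<^sup>2)"
    using ell2_finite_sum[OF a] by (rule real_sqrt_le_mono)
  then show ?thesis unfolding L2_set_def using l2norm_nonneg[of \<xi>] by simp
qed

lemma ell2_add:
  assumes "u \<in> ell2" "v \<in> ell2"
  shows "(\<lambda>x. u x + v x) \<in> ell2" "l2norm (\<lambda>x. u x + v x) \<le> l2norm u + l2norm v"
proof -
  have "sum (sqn (\<lambda>x. u x + v x)) G \<le> (l2norm u + l2norm v)\<^sup>2" if "finite G" for G
  proof -
    have "L2_set (\<lambda>x. cmod (u x + v x)) G \<le> L2_set (\<lambda>x. cmod (u x) + cmod (v x)) G"
      by (rule L2_set_mono) (auto simp: norm_triangle_ineq)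
    also have "\<dots> \<le> L2_set (\<lambda>x. cmod (u x)) G + L2_set (\<lambda>x. cmod (v x)) G"
      by (rule L2_set_triangle_ineq)
    also have "\<dots> \<le> l2norm u + l2norm v"
      using L2_le_l2norm[OF assms(1) that] L2_le_l2norm[OF assms(2) that] by simp
    finally have "sqrt (sum (sqn (\<lambda>x. u x + v x)) G) \<le> l2norm u + l2norm v"
      unfolding L2_set_def .
    then have "(sqrt (sum (sqn (\<lambda>x. u x + v x)) G))\<^sup>2 \<le> (l2norm u + l2norm v)\<^sup>2"
      by (rule power_mono) (auto intro!: sum_nonneg)
    then show ?thesis by (simp add: sum_nonneg)
  qed
  from ell2_by_finite_sums'[OF this] show "(\<lambda>x. u x + v x) \<in> ell2" "l2norm (\<lambda>x. u x + v x) \<le> l2norm u + l2norm v"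
    by (auto simp: l2norm_nonneg)
qed

lemma ell2_scale:
  assumes "u \<in> ell2"
  shows "(\<lambda>x. c * u x) \<in> ell2" "l2norm (\<lambda>x. c * u x) = cmod c * l2norm u"
proof -
  have e: "sqn (\<lambda>x. c * u x) = (\<lambda>x. (cmod c)\<^sup>2 * sqn u x)"
    by (auto simp: norm_mult power_mult_distrib)
  have s: "sqn u summable_on UNIV" using assms unfolding ell2_def by simp
  show "(\<lambda>x. c * u x) \<in> ell2" unfolding ell2_def
    using summable_on_cmult_right[OF s, of "(cmod c)\<^sup>2"] by (simp add: norm_mult power_mult_distrib)
  have "(l2norm (\<lambda>x. c * u x))\<^sup>2 = (cmod c * l2norm u)\<^sup>2"
    unfolding l2norm_sq e power_mult_distrib infsum_cmult_right[OF s] by simp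
  then show "l2norm (\<lambda>x. c * u x) = cmod c * l2norm u"
    by (meson l2norm_nonneg norm_ge_zero power2_eq_iff_nonneg zero_le_mult_iff)
qed

lemma ell2_diff:
  assumes "u \<in> ell2" "v \<in> ell2"
  shows "(\<lambda>x. u x - v x) \<in> ell2" "l2norm (\<lambda>x. u x - v x) \<le> l2norm u + l2norm v"
proof -
  have m: "(\<lambda>x. (-1) * v x) \<in> ell2" "l2norm (\<lambda>x. (-1) * v x) = l2norm v"
    using ell2_scale[OF assms(2), of "-1"] by auto
  have e: "(\<lambda>x. u x - v x) = (\<lambda>x. u x + (-1) * v x)" by simp
  have "(\<lambda>x. u x + (-1) * v x) \<in> ell2" "l2norm (\<lambda>x. u x + (-1) * v x) \<le> l2norm u + l2norm (\<lambda>x. (-1) * v x)"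
    using ell2_add[OF assms(1) m(1)] by simp_all
  then show "(\<lambda>x. u x - v x) \<in> ell2" "l2norm (\<lambda>x. u x - v x) \<le> l2norm u + l2norm v"
    unfolding e m(2) by simp_all
qed

lemma ell2_zero: "(\<lambda>x. 0) \<in> ell2" "l2norm (\<lambda>x. 0) = 0"
  unfolding ell2_def l2norm_def by simp_all

lemma ell2_coord: "\<xi> \<in> ell2 \<Longrightarrow> cmod (\<xi> y) \<le> l2norm \<xi>"
proof -
  assume a: "\<xi> \<in> ell2"
  have "sqn \<xi> y \<le> (l2norm \<xi>)\<^sup>2" using ell2_finite_sum[OF a, of "{y}"] by simp
  then show ?thesis by (rule power2_le_imp_le) (rule l2norm_nonneg)
qed

lemma ell2_parallelogram:
  assumes "u \<in> ell2" "v \<in> ell2"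
  shows "(l2norm (\<lambda>x. u x + v x))\<^sup>2 + (l2norm (\<lambda>x. u x - v x))\<^sup>2 = 2 * (l2norm u)\<^sup>2 + 2 * (l2norm v)\<^sup>2"
proof -
  have su: "sqn u summable_on UNIV" "sqn v summable_on UNIV"
    "sqn (\<lambda>x. u x + v x) summable_on UNIV" "sqn (\<lambda>x. u x - v x) summable_on UNIV"
    using assms ell2_add ell2_diff unfolding ell2_def by auto
  have pw: "sqn (\<lambda>x. u x + v x) x + sqn (\<lambda>x. u x - v x) x = 2 * sqn u x + 2 * sqn v x" for x
    unfolding cmod_power2 by (simp add: power2_eq_square algebra_simps)
  have "(l2norm (\<lambda>x. u x + v x))\<^sup>2 + (l2norm (\<lambda>x. u x - v x))\<^sup>2
     = infsum (sqn (\<lambda>x. u x + v x)) UNIV + infsum (sqn (\<lambda>x. u x - v x)) UNIV"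
    by (simp only: l2norm_sq)
  also have "\<dots> = infsum (\<lambda>x. sqn (\<lambda>x. u x + v x) x + sqn (\<lambda>x. u x - v x) x) UNIV"
    using infsum_add[OF su(3,4)] by simp
  also have "\<dots> = infsum (\<lambda>x. 2 * sqn u x + 2 * sqn v x) UNIV"
    unfolding pw ..
  also have "\<dots> = infsum (\<lambda>x. 2 * sqn u x) UNIV + infsum (\<lambda>x. 2 * sqn v x) UNIV"
    by (rule infsum_add[OF summable_on_cmult_right[OF su(1)] summable_on_cmult_right[OF su(2)]])
  also have "\<dots> = 2 * (l2norm u)\<^sup>2 + 2 * (l2norm v)\<^sup>2"
    by (simp only: infsum_cmult_right[OF su(1)] infsum_cmult_right[OF su(2)] l2norm_sq)
  finally show ?thesis .
qed


lemma ell2_fatou: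
  assumes v: "\<And>n. v n \<in> ell2" and b: "\<And>n. l2norm (v n) \<le> M"
    and lim: "\<And>y. (\<lambda>n. v n y) \<longlonglongrightarrow> w y"
  shows "w \<in> ell2" "l2norm w \<le> M"
proof -
  have M0: "0 \<le> M" using l2norm_nonneg[of "v 0"] b[of 0] by linarith
  have "sum (sqn w) G \<le> M\<^sup>2" if "finite G" for G
  proof -
    have l: "(\<lambda>n. sum (sqn (v n)) G) \<longlonglongrightarrow> sum (sqn w) G"
      by (intro tendsto_sum tendsto_power tendsto_norm lim)
    have "sum (sqn (v n)) G \<le> M\<^sup>2" for n
    proof -
      have "sum (sqn (v n)) G \<le> (l2norm (v n))\<^sup>2" by (rule ell2_finite_sum[OF v that])
      also have "\<dots> \<le> M\<^sup>2" by (rule power_mono[OF b l2norm_nonneg])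
      finally show ?thesis .
    qed
    then show ?thesis using LIMSEQ_le_const2[OF l] by blast
  qed
  from ell2_by_finite_sums'[OF this M0] show "w \<in> ell2" "l2norm w \<le> M" by auto
qed

lemma ell2_complete:
  assumes v: "\<And>n. v n \<in> ell2"
    and C: "\<And>e. e > 0 \<Longrightarrow> \<exists>N. \<forall>m\<ge>N. \<forall>n\<ge>N. l2norm (\<lambda>x. v m x - v n x) < e"
  shows "\<exists>\<eta>\<in>ell2. (\<lambda>n. l2norm (\<lambda>x. v n x - \<eta> x)) \<longlonglongrightarrow> 0"
proof -
  have "Cauchy (\<lambda>n. v n y)" for y
  proof (rule metric_CauchyI)
    fix e :: real assume "e > 0"
    then obtain N where N: "\<forall>m\<ge>N. \<forall>n\<ge>N. l2norm (\<lambda>x. v m x - v n x) < e" using C by blast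
    have "dist (v m y) (v n y) < e" if "m \<ge> N" "n \<ge> N" for m n
    proof -
      have "dist (v m y) (v n y) = cmod ((\<lambda>x. v m x - v n x) y)" by (simp add: dist_norm)
      also have "\<dots> \<le> l2norm (\<lambda>x. v m x - v n x)" by (rule ell2_coord[OF ell2_diff(1)[OF v v]])
      moreover have "l2norm (\<lambda>x. v m x - v n x) < e" using N that by blast
      ultimately show ?thesis by linarith
    qed
    then show "\<exists>M. \<forall>m\<ge>M. \<forall>n\<ge>M. dist (v m y) (v n y) < e" by blast
  qed
  then have "convergent (\<lambda>n. v n y)" for y by (simp add: Cauchy_convergent_iff)
  then obtain \<eta> where lim: "\<And>y. (\<lambda>n. v n y) \<longlonglongrightarrow> \<eta> y"
    unfolding convergent_def by metis
  have key: "\<exists>N. \<forall>m\<ge>N. (\<lambda>x. v m x - \<eta> x) \<in> ell2 \<and> l2norm (\<lambda>x. v m x - \<eta> x) \<le> e" if "e > 0" for e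
  proof -
    obtain N where N: "\<forall>m\<ge>N. \<forall>n\<ge>N. l2norm (\<lambda>x. v m x - v n x) < e" using C[OF \<open>e > 0\<close>] by blast
    have "(\<lambda>x. v m x - \<eta> x) \<in> ell2 \<and> l2norm (\<lambda>x. v m x - \<eta> x) \<le> e" if m: "m \<ge> N" for m
    proof -
      have a: "(\<lambda>x. v m x - v (N + k) x) \<in> ell2" for k using ell2_diff(1)[OF v v] .
      have b: "l2norm (\<lambda>x. v m x - v (N + k) x) \<le> e" for k using N m by (meson le_add1 less_imp_le)
      have c: "(\<lambda>k. v m y - v (N + k) y) \<longlonglongrightarrow> v m y - \<eta> y" for y
      proof -
        have "(\<lambda>k. v (k + N) y) \<longlonglongrightarrow> \<eta> y" by (rule LIMSEQ_ignore_initial_segment[OF lim])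
        then have "(\<lambda>k. v (N + k) y) \<longlonglongrightarrow> \<eta> y" by (simp add: add.commute)
        then show ?thesis by (intro tendsto_diff tendsto_const)
      qed
      show ?thesis using ell2_fatou[of "\<lambda>k x. v m x - v (N + k) x", OF a b c] by simp
    qed
    then show ?thesis by blast
  qed
  obtain N1 where N1: "\<forall>m\<ge>N1. (\<lambda>x. v m x - \<eta> x) \<in> ell2 \<and> l2norm (\<lambda>x. v m x - \<eta> x) \<le> 1"
    using key[of 1] by auto
  have "(\<lambda>x. v N1 x - (v N1 x - \<eta> x)) \<in> ell2"
    using ell2_diff(1)[OF v[of N1], of "\<lambda>x. v N1 x - \<eta> x"] N1 by auto
  then have \<eta>: "\<eta> \<in> ell2" by simp
  have "(\<lambda>n. l2norm (\<lambda>x. v n x - \<eta> x)) \<longlonglongrightarrow> 0"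
  proof (rule LIMSEQ_I)
    fix r :: real assume "r > 0"
    then obtain N where N: "\<forall>m\<ge>N. (\<lambda>x. v m x - \<eta> x) \<in> ell2 \<and> l2norm (\<lambda>x. v m x - \<eta> x) \<le> r / 2"
      using key[of "r/2"] by auto
    have "norm (l2norm (\<lambda>x. v m x - \<eta> x) - 0) < r" if "m \<ge> N" for m
    proof -
      have "l2norm (\<lambda>x. v m x - \<eta> x) \<le> r / 2" using N that by blast
      then show ?thesis using l2norm_nonneg[of "\<lambda>x. v m x - \<eta> x"] \<open>r > 0\<close> by simp
    qed
    then show "\<exists>no. \<forall>n\<ge>no. norm (l2norm (\<lambda>x. v n x - \<eta> x) - 0) < r" by blast
  qed
  with \<eta> show ?thesis by blast
qed

lemma ell2_tail:
  assumes "\<xi> \<in> ell2" "e > 0"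
  shows "\<exists>G. finite G \<and> (\<forall>H. finite H \<and> H \<inter> G = {} \<longrightarrow> sum (sqn \<xi>) H \<le> e)"
proof -
  have bdd: "bdd_above (sum (sqn \<xi>) ` {F. F \<subseteq> UNIV \<and> finite F})"
    using ell2_finite_sum[OF assms(1)] by (auto intro!: bdd_aboveI)
  have S: "infsum (sqn \<xi>) UNIV = (SUP F\<in>{F. finite F \<and> F \<subseteq> UNIV}. sum (sqn \<xi>) F)"
    by (rule nonneg_bdd_above_infsum) (use bdd in auto)
  have "infsum (sqn \<xi>) UNIV - e < (SUP F\<in>{F. finite F \<and> F \<subseteq> UNIV}. sum (sqn \<xi>) F)"
    using S assms(2) by linarith
  moreover have ne: "{F. finite F \<and> F \<subseteq> UNIV} \<noteq> {}" by auto
  moreover have bd: "bdd_above (sum (sqn \<xi>) ` {F. finite F \<and> F \<subseteq> UNIV})" using bdd by (simp add: conj_commute)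
  ultimately obtain G where G: "finite G" "infsum (sqn \<xi>) UNIV - e < sum (sqn \<xi>) G"
    unfolding less_cSUP_iff[OF ne bd] by auto
  have "sum (sqn \<xi>) H \<le> e" if "finite H" "H \<inter> G = {}" for H
  proof -
    have "sum (sqn \<xi>) G + sum (sqn \<xi>) H = sum (sqn \<xi>) (G \<union> H)"
      using that G(1) by (simp add: sum.union_disjoint inf_commute)
    also have "\<dots> \<le> infsum (sqn \<xi>) UNIV"
      using ell2_finite_sum[OF assms(1), of "G \<union> H"] that G(1) unfolding l2norm_sq by simp
    finally show ?thesis using G(2) by linarith
  qed
  then show ?thesis using G(1) by blast
qed

lemma vf_sum:
  assumes inj: "inj_on g A" and H: "finite H"
  shows "finite {x\<in>A. g x \<in> H}" "sum (sqn (vf A g \<xi>)) H = sum (sqn \<xi>) {x\<in>A. g x \<in> H}"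
proof -
  have eq: "{x\<in>A. g x \<in> H} = the_inv_into A g ` {y\<in>H. y \<in> g ` A}"
  proof
    show "{x\<in>A. g x \<in> H} \<subseteq> the_inv_into A g ` {y\<in>H. y \<in> g ` A}"
      using the_inv_into_f_f[OF inj] by (auto intro!: image_eqI)
    show "the_inv_into A g ` {y\<in>H. y \<in> g ` A} \<subseteq> {x\<in>A. g x \<in> H}"
      using the_inv_into_into[OF inj] f_the_inv_into_f[OF inj] by auto
  qed
  show "finite {x\<in>A. g x \<in> H}" unfolding eq using H by simp
  have inj2: "inj_on (the_inv_into A g) {y\<in>H. y \<in> g ` A}"
    using inj_on_the_inv_into[OF inj] by (rule inj_on_subset) auto
  have "sum (sqn (vf A g \<xi>)) H = sum (\<lambda>y. if y \<in> g ` A then sqn \<xi> (the_inv_into A g y) else 0) H"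
    unfolding vf_def by (intro sum.cong) auto
  also have "\<dots> = sum (\<lambda>y. sqn \<xi> (the_inv_into A g y)) {y\<in>H. y \<in> g ` A}"
    using H by (simp add: sum.inter_filter)
  also have "\<dots> = sum (sqn \<xi>) {x\<in>A. g x \<in> H}"
    unfolding eq using sum.reindex[OF inj2, of "sqn \<xi>"] by simp
  finally show "sum (sqn (vf A g \<xi>)) H = sum (sqn \<xi>) {x\<in>A. g x \<in> H}" .
qed

lemma vf_ell2:
  assumes inj: "inj_on g A" and \<xi>: "\<xi> \<in> ell2"
  shows "vf A g \<xi> \<in> ell2" "l2norm (vf A g \<xi>) \<le> l2norm \<xi>"
proof -
  have "sum (sqn (vf A g \<xi>)) H \<le> (l2norm \<xi>)\<^sup>2" if "finite H" for H
    using vf_sum[OF inj that] ell2_finite_sum[OF \<xi>] by simp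
  from ell2_by_finite_sums'[OF this l2norm_nonneg]
  show "vf A g \<xi> \<in> ell2" "l2norm (vf A g \<xi>) \<le> l2norm \<xi>" by auto
qed



lemma co_D: "closed_operator D h \<Longrightarrow> \<xi> \<in> D \<Longrightarrow> \<xi> \<in> ell2"
  unfolding closed_operator_def by blast
lemma co_h: "closed_operator D h \<Longrightarrow> \<xi> \<in> D \<Longrightarrow> h \<xi> \<in> ell2"
  unfolding closed_operator_def by blast
lemma co_zero: "closed_operator D h \<Longrightarrow> (\<lambda>x. 0) \<in> D"
  unfolding closed_operator_def by blast
lemma co_add: "closed_operator D h \<Longrightarrow> \<xi> \<in> D \<Longrightarrow> \<eta> \<in> D \<Longrightarrow>
    (\<lambda>x. \<xi> x + \<eta> x) \<in> D \<and> h (\<lambda>x. \<xi> x + \<eta> x) = (\<lambda>x. h \<xi> x + h \<eta> x)"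
  unfolding closed_operator_def by blast
lemma co_scale: "closed_operator D h \<Longrightarrow> \<xi> \<in> D \<Longrightarrow>
    (\<lambda>x. c * \<xi> x) \<in> D \<and> h (\<lambda>x. c * \<xi> x) = (\<lambda>x. c * h \<xi> x)"
  unfolding closed_operator_def by blast
lemma co_closed: "closed_operator D h \<Longrightarrow> (\<forall>n. \<xi>s n \<in> D) \<Longrightarrow> \<xi> \<in> ell2 \<Longrightarrow> \<eta> \<in> ell2 \<Longrightarrow>
        (\<lambda>n. l2norm (\<lambda>x. \<xi>s n x - \<xi> x)) \<longlonglongrightarrow> 0 \<Longrightarrow>
        (\<lambda>n. l2norm (\<lambda>x. h (\<xi>s n) x - \<eta> x)) \<longlonglongrightarrow> 0 \<Longrightarrow> \<xi> \<in> D \<and> h \<xi> = \<eta>"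
  unfolding closed_operator_def by blast

lemma co_diff: assumes "closed_operator D h" "\<xi> \<in> D" "\<eta> \<in> D"
  shows "(\<lambda>x. \<xi> x - \<eta> x) \<in> D \<and> h (\<lambda>x. \<xi> x - \<eta> x) = (\<lambda>x. h \<xi> x - h \<eta> x)"
proof -
  have m: "(\<lambda>x. (-1) * \<eta> x) \<in> D" "h (\<lambda>x. (-1) * \<eta> x) = (\<lambda>x. (-1) * h \<eta> x)"
    using co_scale[OF assms(1,3), of "-1"] by simp_all
  have "(\<lambda>x. \<xi> x + (\<lambda>x. (-1) * \<eta> x) x) \<in> D \<and> h (\<lambda>x. \<xi> x + (\<lambda>x. (-1) * \<eta> x) x) = (\<lambda>x. h \<xi> x + h (\<lambda>x. (-1) * \<eta> x) x)"
    by (rule co_add[OF assms(1,2) m(1)])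
  then show ?thesis unfolding m(2) by simp
qed

lemma co_h0: assumes "closed_operator D h" shows "h (\<lambda>x. 0) = (\<lambda>x. 0)"
  using co_scale[OF assms co_zero[OF assms], of 0] by simp

lemma co_mid: assumes "closed_operator D h" "u \<in> D" "v \<in> D"
  shows "(\<lambda>x. (1/2) * (u x + v x)) \<in> D \<and> h (\<lambda>x. (1/2) * (u x + v x)) = (\<lambda>x. (1/2) * (h u x + h v x))"
proof -
  have a: "(\<lambda>x. u x + v x) \<in> D" "h (\<lambda>x. u x + v x) = (\<lambda>x. h u x + h v x)"
    using co_add[OF assms] by auto
  show ?thesis using co_scale[OF assms(1) a(1), of "1/2"] unfolding a(2) by simp
qed

lemma l2norm_mid: assumes "u \<in> ell2" "v \<in> ell2"
  shows "l2norm (\<lambda>x. (1/2) * (u x + v x)) = (1/2) * l2norm (\<lambda>x. u x + v x)"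
    "l2norm (\<lambda>x. (1/2) * (u x + v x)) \<le> (l2norm u + l2norm v) / 2"
proof -
  show e: "l2norm (\<lambda>x. (1/2) * (u x + v x)) = (1/2) * l2norm (\<lambda>x. u x + v x)"
    using ell2_scale(2)[OF ell2_add(1)[OF assms], of "1/2"] by simp
  show "l2norm (\<lambda>x. (1/2) * (u x + v x)) \<le> (l2norm u + l2norm v) / 2"
    unfolding e using ell2_add(2)[OF assms] by simp
qed

inductive_set midhull :: "('a \<Rightarrow> complex) set \<Rightarrow> ('a \<Rightarrow> complex) set" for S where
  gen: "u \<in> S \<Longrightarrow> u \<in> midhull S"
| mid: "u \<in> midhull S \<Longrightarrow> v \<in> midhull S \<Longrightarrow> (\<lambda>x. (1/2) * (u x + v x)) \<in> midhull S"

lemma midhull_mono: "S \<subseteq> T \<Longrightarrow> midhull S \<subseteq> midhull T"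
proof
  fix u assume st: "S \<subseteq> T" and "u \<in> midhull S"
  from this(2) show "u \<in> midhull T" by (induction rule: midhull.induct) (use st in \<open>blast intro: midhull.intros\<close>)+
qed

lemma aux_ineq: "(x::real) < E / 8 \<Longrightarrow> a < E / 4 \<Longrightarrow> b < E / 4 \<Longrightarrow> L \<le> 4 * x + a + b \<Longrightarrow> L < E"
  by linarith

lemma CW:
  fixes w :: "nat \<Rightarrow> 'a \<Rightarrow> complex"
  assumes co: "closed_operator D h"
    and w: "\<And>n. w n \<in> D" and wl: "(\<lambda>n. l2norm (w n)) \<longlonglongrightarrow> 0"
    and K: "\<And>n. l2norm (h (w n)) \<le> K"
  shows "(\<lambda>n. h (w n) y) \<longlonglongrightarrow> 0"
proof (rule ccontr)
  assume nc: "\<not> (\<lambda>n. h (w n) y) \<longlonglongrightarrow> 0"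
  obtain \<epsilon> where \<epsilon>: "\<epsilon> > 0" "\<And>M. \<exists>n\<ge>M. cmod (h (w n) y) \<ge> \<epsilon>"
    using nc unfolding LIMSEQ_iff by (force simp: not_less)
  define c where "c n = (if h (w n) y = 0 then 0 else cnj (h (w n) y) / complex_of_real (cmod (h (w n) y)))" for n
  define w' where "w' n = (\<lambda>x. c n * w n x)" for n
  have c1: "cmod (c n) \<le> 1" for n
    unfolding c_def by (auto simp: norm_divide)
  have w'D: "w' n \<in> D" and hw': "h (w' n) = (\<lambda>x. c n * h (w n) x)" for n
    using co_scale[OF co w, of "c n" n] unfolding w'_def by auto
  have hw'y: "h (w' n) y = complex_of_real (cmod (h (w n) y))" for n
    unfolding hw' c_def
    by (auto simp: complex_norm_square[symmetric] power2_eq_square field_simps)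
  have nw': "l2norm (w' n) \<le> l2norm (w n)" for n
    unfolding w'_def using ell2_scale(2)[OF co_D[OF co w], of "c n"] c1[of n]
    by (simp add: mult_left_le_one_le l2norm_nonneg)
  have nhw': "l2norm (h (w' n)) \<le> K" for n
  proof -
    have "l2norm (h (w' n)) = cmod (c n) * l2norm (h (w n))"
      unfolding hw' by (rule ell2_scale(2)[OF co_h[OF co w]])
    also have "\<dots> \<le> l2norm (h (w n))" using c1[of n] by (simp add: mult_left_le_one_le l2norm_nonneg)
    finally show ?thesis using K[of n] by linarith
  qed
  define S where "S m = w' ` {n. n \<ge> m \<and> cmod (h (w n) y) \<ge> \<epsilon>}" for m
  define C where "C m = midhull (S m)" for m
  have Sne: "S m \<noteq> {}" for m using \<epsilon>(2)[of m] unfolding S_def by auto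
  have Cne: "C m \<noteq> {}" for m using Sne[of m] unfolding C_def by (auto intro: midhull.gen)
  have Cmono: "C m' \<subseteq> C m" if "m \<le> m'" for m m'
    unfolding C_def by (rule midhull_mono) (use that in \<open>auto simp: S_def\<close>)
  have Cprop: "u \<in> D \<and> l2norm (h u) \<le> K \<and> Re (h u y) \<ge> \<epsilon>" if "u \<in> C m" for u m
    using that unfolding C_def
  proof (induction rule: midhull.induct)
    case (gen u)
    then obtain n where "u = w' n" "cmod (h (w n) y) \<ge> \<epsilon>" unfolding S_def by auto
    then show ?case using w'D nhw' hw'y by auto
  next
    case (mid u v)
    have m: "(\<lambda>x. (1/2) * (u x + v x)) \<in> D" "h (\<lambda>x. (1/2) * (u x + v x)) = (\<lambda>x. (1/2) * (h u x + h v x))"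
      using co_mid[OF co, of u v] mid by auto
    have "l2norm (h (\<lambda>x. (1/2) * (u x + v x))) \<le> (l2norm (h u) + l2norm (h v)) / 2"
      unfolding m(2) by (rule l2norm_mid(2)) (use co_h[OF co] mid in auto)
    then show ?case using m mid by auto
  qed
  have Csmall: "l2norm u \<le> \<delta>" if "\<forall>n\<ge>M. l2norm (w n) \<le> \<delta>" "m \<ge> M" "u \<in> C m" for u m M \<delta>
    using that(3) unfolding C_def
  proof (induction rule: midhull.induct)
    case (gen u)
    then obtain n where n: "u = w' n" "n \<ge> m" unfolding S_def by auto
    have "l2norm (w n) \<le> \<delta>" using that(1,2) n(2) by auto
    then have "l2norm (w' n) \<le> \<delta>" using nw'[of n] by linarith
    then show ?case using n(1) by simp
  next
    case (mid u v)
    have "l2norm (\<lambda>x. (1/2) * (u x + v x)) \<le> (l2norm u + l2norm v) / 2"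
      by (rule l2norm_mid(2)) (use co_D[OF co] Cprop mid in \<open>auto simp: C_def\<close>)
    then show ?case using mid by auto
  qed
  define d where "d m = Inf ((\<lambda>u. l2norm (h u)) ` C m)" for m
  have bddC: "bdd_below ((\<lambda>u. l2norm (h u)) ` C m)" for m
    by (rule bdd_belowI[of _ 0]) (auto simp: l2norm_nonneg)
  have d_le: "d m \<le> l2norm (h u)" if "u \<in> C m" for u m
    unfolding d_def by (rule cINF_lower[OF bddC that])
  have d0: "0 \<le> d m" for m
    unfolding d_def using Cne[of m] by (auto intro!: cInf_greatest simp: l2norm_nonneg)
  have dK: "d m \<le> K" for m
    using Cne[of m] d_le Cprop by (meson all_not_in_conv order_trans)
  have dmono: "d m \<le> d m'" if "m \<le> m'" for m m'
    unfolding d_def using Cne[of m'] bddC[of m] Cmono[OF that] by (intro cInf_superset_mono) auto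
  have "convergent d"
    by (rule Bseq_mono_convergent) (use d0 dK dmono in \<open>auto intro!: BseqI'[of _ K]\<close>)
  then have "convergent (\<lambda>m. (d m)\<^sup>2)" by (simp add: convergent_def tendsto_power) (metis tendsto_power)
  then have dC: "Cauchy (\<lambda>m. (d m)\<^sup>2)" by (rule convergent_Cauchy)
  have "\<exists>u. u \<in> C m \<and> l2norm (h u) < sqrt ((d m)\<^sup>2 + 1 / (real m + 1))" for m
  proof -
    have "d m < sqrt ((d m)\<^sup>2 + 1 / (real m + 1))"
      using d0[of m] by (simp add: real_less_rsqrt)
    then show ?thesis unfolding d_def cInf_less_iff[OF _ bddC] using Cne by (simp add: cInf_less_iff[OF _ bddC]) blast
  qed
  then obtain u where uC: "\<And>m. u m \<in> C m" and uh: "\<And>m. l2norm (h (u m)) < sqrt ((d m)\<^sup>2 + 1 / (real m + 1))"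
    by metis
  have uh2: "(l2norm (h (u m)))\<^sup>2 \<le> (d m)\<^sup>2 + 1 / (real m + 1)" for m
  proof -
    have "(l2norm (h (u m)))\<^sup>2 \<le> (sqrt ((d m)\<^sup>2 + 1 / (real m + 1)))\<^sup>2"
      using uh[of m] l2norm_nonneg by (intro power_mono) auto
    then show ?thesis by (simp add: add_nonneg_nonneg)
  qed
  have uD: "u m \<in> D" for m using Cprop uC by blast
  have hu: "h (u m) \<in> ell2" for m using co_h[OF co uD] .
  have pair: "(l2norm (\<lambda>x. h (u m) x - h (u n) x))\<^sup>2 \<le> 4 * \<bar>(d m)\<^sup>2 - (d n)\<^sup>2\<bar> + 2 / (real m + 1) + 2 / (real n + 1)" for m n
  proof -
    define k where "k = min m n"
    have "u m \<in> C k" "u n \<in> C k" using uC Cmono unfolding k_def by (meson min.cobounded1 min.cobounded2 subsetD)+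
    then have "(\<lambda>x. (1/2) * (u m x + u n x)) \<in> C k" unfolding C_def by (rule midhull.mid)
    then have "d k \<le> l2norm (h (\<lambda>x. (1/2) * (u m x + u n x)))" by (rule d_le)
    also have "\<dots> = (1/2) * l2norm (\<lambda>x. h (u m) x + h (u n) x)"
      using co_mid[OF co uD uD, of m n] l2norm_mid(1)[OF hu hu, of m n] by simp
    finally have "(2 * d k)\<^sup>2 \<le> (l2norm (\<lambda>x. h (u m) x + h (u n) x))\<^sup>2"
      using d0[of k] by (intro power_mono) auto
    then have "(l2norm (\<lambda>x. h (u m) x - h (u n) x))\<^sup>2 \<le> 2 * (l2norm (h (u m)))\<^sup>2 + 2 * (l2norm (h (u n)))\<^sup>2 - 4 * (d k)\<^sup>2"
      using ell2_parallelogram[OF hu hu, of m n] by (simp add: power_mult_distrib)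
    also have "\<dots> \<le> 2 * ((d m)\<^sup>2 + 1 / (real m + 1)) + 2 * ((d n)\<^sup>2 + 1 / (real n + 1)) - 4 * (d k)\<^sup>2"
      using uh2[of m] uh2[of n] by (smt (verit))
    also have "\<dots> \<le> 4 * \<bar>(d m)\<^sup>2 - (d n)\<^sup>2\<bar> + 2 / (real m + 1) + 2 / (real n + 1)"
      unfolding k_def by (cases "m \<le> n") (auto simp: min_def abs_if)
    finally show ?thesis .
  qed
  have "\<exists>\<eta>\<in>ell2. (\<lambda>n. l2norm (\<lambda>x. h (u n) x - \<eta> x)) \<longlonglongrightarrow> 0"
  proof (rule ell2_complete[OF hu])
    fix e :: real assume e: "e > 0"
    obtain N1 where N1: "\<forall>m\<ge>N1. \<forall>n\<ge>N1. dist ((d m)\<^sup>2) ((d n)\<^sup>2) < e\<^sup>2 / 8"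
      using dC e unfolding Cauchy_def by (metis divide_pos_pos zero_less_numeral zero_less_power)
    obtain N2 :: nat where N2: "8 / e\<^sup>2 < real N2" using reals_Archimedean2 by blast
    have "l2norm (\<lambda>x. h (u m) x - h (u n) x) < e" if "m \<ge> max N1 N2" "n \<ge> max N1 N2" for m n
    proof -
      have "\<bar>(d m)\<^sup>2 - (d n)\<^sup>2\<bar> < e\<^sup>2 / 8" using N1 that by (auto simp: dist_real_def)
      moreover have "2 / (real m + 1) < e\<^sup>2 / 4" "2 / (real n + 1) < e\<^sup>2 / 4"
      proof -
        have p: "0 < e\<^sup>2" using e by simp
        have "8 / e\<^sup>2 < real m + 1" "8 / e\<^sup>2 < real n + 1" using N2 that by auto
        then show "2 / (real m + 1) < e\<^sup>2 / 4" "2 / (real n + 1) < e\<^sup>2 / 4"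
          using p by (auto simp: field_simps)
      qed
      ultimately have "(l2norm (\<lambda>x. h (u m) x - h (u n) x))\<^sup>2 < e\<^sup>2"
        by (rule aux_ineq[OF _ _ _ pair[of m n]])
      then show ?thesis using e by (simp add: power_less_imp_less_base)
    qed
    then show "\<exists>N. \<forall>m\<ge>N. \<forall>n\<ge>N. l2norm (\<lambda>x. h (u m) x - h (u n) x) < e" by blast
  qed
  then obtain \<eta> where \<eta>: "\<eta> \<in> ell2" and \<eta>l: "(\<lambda>n. l2norm (\<lambda>x. h (u n) x - \<eta> x)) \<longlonglongrightarrow> 0" by blast
  have ul: "(\<lambda>n. l2norm (\<lambda>x. u n x - (\<lambda>x. 0) x)) \<longlonglongrightarrow> 0"
  proof (rule LIMSEQ_I)
    fix r :: real assume r: "r > 0"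
    obtain M where M: "\<forall>n\<ge>M. norm (l2norm (w n) - 0) < r / 2" using LIMSEQ_D[OF wl, of "r/2"] r by auto
    have M': "\<forall>n\<ge>M. l2norm (w n) \<le> r / 2" using M by auto
    have "norm (l2norm (\<lambda>x. u n x - (\<lambda>x. 0) x) - 0) < r" if "n \<ge> M" for n
      using Csmall[OF M' that uC[of n]] r l2norm_nonneg[of "u n"] by simp
    then show "\<exists>no. \<forall>n\<ge>no. norm (l2norm (\<lambda>x. u n x - (\<lambda>x. 0) x) - 0) < r" by blast
  qed
  have "(\<lambda>x. 0) \<in> D \<and> h (\<lambda>x. 0) = \<eta>"
    by (rule co_closed[OF co _ ell2_zero(1) \<eta> ul \<eta>l]) (use uD in blast)
  then have \<eta>0: "\<eta> = (\<lambda>x. 0)" using co_h0[OF co] by simp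
  obtain N where N: "\<forall>n\<ge>N. norm (l2norm (\<lambda>x. h (u n) x - \<eta> x) - 0) < \<epsilon>" using LIMSEQ_D[OF \<eta>l \<epsilon>(1)] by blast
  have "cmod (h (u N) y) \<le> l2norm (\<lambda>x. h (u N) x - \<eta> x)"
    using ell2_coord[OF ell2_diff(1)[OF hu \<eta>], of N y] \<eta>0 by simp
  moreover have "\<epsilon> \<le> cmod (h (u N) y)" using Cprop[OF uC[of N]] complex_Re_le_cmod order_trans by blast
  moreover have "l2norm (\<lambda>x. h (u N) x - \<eta> x) < \<epsilon>" using N l2norm_nonneg by fastforce
  ultimately show False by linarith
qed



definition agree :: "'a::metric_space \<Rightarrow> real \<Rightarrow> 'a set \<Rightarrow> ('a \<Rightarrow> 'a) \<Rightarrow> 'a set \<Rightarrow> ('a \<Rightarrow> 'a) \<Rightarrow> bool" where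
  "agree x0 n A f A' f' \<longleftrightarrow> (\<forall>x\<in>cball x0 n. (x \<in> A \<longleftrightarrow> x \<in> A') \<and> (x \<in> A \<longrightarrow> f x = f' x))"

definition cm :: "(('a \<Rightarrow> complex) \<Rightarrow> ('a \<Rightarrow> complex)) \<Rightarrow> 'a set \<Rightarrow> ('a \<Rightarrow> 'a) \<Rightarrow> ('a \<Rightarrow> complex) \<Rightarrow> ('a \<Rightarrow> complex)" where
  "cm h A f \<xi> = (\<lambda>x. h (vf A f \<xi>) x - vf A f (h \<xi>) x)"

lemma comm_norm_cm: "comm_norm D h A f = (SUP \<xi>\<in>{\<xi>\<in>D. l2norm \<xi> \<le> 1}. ennreal (l2norm (cm h A f \<xi>)))"
  unfolding comm_norm_def cm_def ..

lemma vf_cong: "(\<And>x. x \<in> A \<Longrightarrow> f x = g x) \<Longrightarrow> vf A f = vf A g"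
proof -
  assume e: "\<And>x. x \<in> A \<Longrightarrow> f x = g x"
  have i: "f ` A = g ` A" using e by auto
  have t: "the_inv_into A f y = the_inv_into A g y" for y
    unfolding the_inv_into_def by (rule arg_cong[where f = The]) (use e in auto)
  show ?thesis unfolding vf_def i t ..
qed

lemma comm_norm_cong: "(\<And>x. x \<in> A \<Longrightarrow> f x = g x) \<Longrightarrow> comm_norm D h A f = comm_norm D h A g"
  unfolding comm_norm_def using vf_cong by metis

lemma prt_pt: "partial_r_translation r A f \<Longrightarrow> partial_translation A f"
  unfolding partial_r_translation_def partial_translation_def by blast

lemma prt_subset: "partial_r_translation r A f \<Longrightarrow> B \<subseteq> A \<Longrightarrow> partial_r_translation r B f"
  unfolding partial_r_translation_def by (auto intro: inj_on_subset)

lemma pt_inj: "partial_translation A f \<Longrightarrow> inj_on f A"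
  unfolding partial_translation_def by blast

lemma vf_split:
  assumes inj: "inj_on f A" and A: "A = A1 \<union> A2" "A1 \<inter> A2 = {}"
  shows "vf A f \<xi> = (\<lambda>y. vf A1 f \<xi> y + vf A2 f \<xi> y)"
proof
  fix y
  have inj1: "inj_on f A1" and inj2: "inj_on f A2" using inj A by (auto intro: inj_on_subset)
  show "vf A f \<xi> y = vf A1 f \<xi> y + vf A2 f \<xi> y"
  proof (cases "y \<in> f ` A")
    case False
    then show ?thesis unfolding vf_def using A by auto
  next
    case True
    then obtain x where x: "x \<in> A" "y = f x" by auto
    show ?thesis
    proof (cases "x \<in> A1")
      case True
      have "y \<notin> f ` A2"
      proof
        assume "y \<in> f ` A2"
        then obtain x' where "x' \<in> A2" "y = f x'" by auto
        then show False using inj x True A unfolding inj_on_def by blast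
      qed
      then show ?thesis unfolding vf_def using x True the_inv_into_f_f[OF inj x(1)] the_inv_into_f_f[OF inj1 True]
        by auto
    next
      case False
      then have x2: "x \<in> A2" using x A by auto
      have "y \<notin> f ` A1"
      proof
        assume "y \<in> f ` A1"
        then obtain x' where "x' \<in> A1" "y = f x'" by auto
        then show False using inj x False A unfolding inj_on_def by blast
      qed
      then show ?thesis unfolding vf_def using x x2 the_inv_into_f_f[OF inj x(1)] the_inv_into_f_f[OF inj2 x2]
        by auto
    qed
  qed
qed

lemma vf_D: "domain_invariant D \<Longrightarrow> partial_translation A f \<Longrightarrow> \<xi> \<in> D \<Longrightarrow> vf A f \<xi> \<in> D"
  unfolding domain_invariant_def by blast

lemma cm_ell2:
  assumes co: "closed_operator D h" and inv: "domain_invariant D" and pt: "partial_translation A f" and \<xi>: "\<xi> \<in> D"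
  shows "cm h A f \<xi> \<in> ell2"
  unfolding cm_def using co_h[OF co vf_D[OF inv pt \<xi>]] vf_ell2(1)[OF pt_inj[OF pt] co_h[OF co \<xi>]]
  by (rule ell2_diff(1))

lemma cm_split:
  assumes co: "closed_operator D h" and inv: "domain_invariant D" and pt: "partial_translation A f"
    and A: "A = A1 \<union> A2" "A1 \<inter> A2 = {}" and \<xi>: "\<xi> \<in> D"
  shows "cm h A f \<xi> = (\<lambda>y. cm h A1 f \<xi> y + cm h A2 f \<xi> y)"
proof -
  have pt1: "partial_translation A1 f" and pt2: "partial_translation A2 f"
    using pt A unfolding partial_translation_def by (auto intro: inj_on_subset)
  have s: "vf A f \<zeta> = (\<lambda>y. vf A1 f \<zeta> y + vf A2 f \<zeta> y)" for \<zeta>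
    by (rule vf_split[OF pt_inj[OF pt] A])
  have "h (vf A f \<xi>) = (\<lambda>x. h (vf A1 f \<xi>) x + h (vf A2 f \<xi>) x)"
    unfolding s[of \<xi>] using co_add[OF co vf_D[OF inv pt1 \<xi>] vf_D[OF inv pt2 \<xi>]] by blast
  then show ?thesis unfolding cm_def s[of "h \<xi>"] by (auto simp: algebra_simps)
qed

lemma comm_norm_le3:
  assumes "\<And>\<xi>. \<xi> \<in> D \<Longrightarrow> l2norm \<xi> \<le> 1 \<Longrightarrow> l2norm (cm h X f \<xi>) \<le> l2norm (cm h Y g \<xi>) + l2norm (cm h Z k \<xi>)"
  shows "comm_norm D h X f \<le> comm_norm D h Y g + comm_norm D h Z k"
  unfolding comm_norm_cm
proof (rule SUP_least)
  fix \<xi> assume "\<xi> \<in> {\<xi> \<in> D. l2norm \<xi> \<le> 1}"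
  then have a: "\<xi> \<in> D" "l2norm \<xi> \<le> 1" by auto
  have "ennreal (l2norm (cm h X f \<xi>)) \<le> ennreal (l2norm (cm h Y g \<xi>) + l2norm (cm h Z k \<xi>))"
    using assms[OF a] by (rule ennreal_leI)
  also have "\<dots> = ennreal (l2norm (cm h Y g \<xi>)) + ennreal (l2norm (cm h Z k \<xi>))"
    by (rule ennreal_plus) (auto simp: l2norm_nonneg)
  also have "\<dots> \<le> (SUP \<xi>\<in>{\<xi> \<in> D. l2norm \<xi> \<le> 1}. ennreal (l2norm (cm h Y g \<xi>))) + (SUP \<xi>\<in>{\<xi> \<in> D. l2norm \<xi> \<le> 1}. ennreal (l2norm (cm h Z k \<xi>)))"
    using a by (intro add_mono SUP_upper) auto
  finally show "ennreal (l2norm (cm h X f \<xi>)) \<le> \<dots>" .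
qed

lemma comm_norm_split:
  assumes co: "closed_operator D h" and inv: "domain_invariant D" and pt: "partial_translation A f"
    and A: "A = A1 \<union> A2" "A1 \<inter> A2 = {}"
  shows "comm_norm D h A f \<le> comm_norm D h A1 f + comm_norm D h A2 f"
    "comm_norm D h A1 f \<le> comm_norm D h A f + comm_norm D h A2 f"
proof -
  have pt1: "partial_translation A1 f" and pt2: "partial_translation A2 f"
    using pt A unfolding partial_translation_def by (auto intro: inj_on_subset)
  show "comm_norm D h A f \<le> comm_norm D h A1 f + comm_norm D h A2 f"
  proof (rule comm_norm_le3)
    fix \<xi> assume \<xi>: "\<xi> \<in> D"
    show "l2norm (cm h A f \<xi>) \<le> l2norm (cm h A1 f \<xi>) + l2norm (cm h A2 f \<xi>)"
      unfolding cm_split[OF co inv pt A \<xi>] by (rule ell2_add(2)[OF cm_ell2[OF co inv pt1 \<xi>] cm_ell2[OF co inv pt2 \<xi>]])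
  qed
  show "comm_norm D h A1 f \<le> comm_norm D h A f + comm_norm D h A2 f"
  proof (rule comm_norm_le3)
    fix \<xi> assume \<xi>: "\<xi> \<in> D"
    have e: "cm h A1 f \<xi> = (\<lambda>y. cm h A f \<xi> y - cm h A2 f \<xi> y)"
      unfolding cm_split[OF co inv pt A \<xi>] by simp
    show "l2norm (cm h A1 f \<xi>) \<le> l2norm (cm h A f \<xi>) + l2norm (cm h A2 f \<xi>)"
      unfolding e by (rule ell2_diff(2)[OF cm_ell2[OF co inv pt \<xi>] cm_ell2[OF co inv pt2 \<xi>]])
  qed
qed



lemma agree_sym: "agree x0 n A f A' f' \<Longrightarrow> agree x0 n A' f' A f"
  unfolding agree_def by auto

lemma vf_local1:
  assumes pr: "partial_r_translation r A f" "partial_r_translation r A' f'" and ag: "agree x0 n A f A' f'"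
    and y: "dist x0 y + r \<le> n" and yA: "y \<in> f ` A"
  shows "y \<in> f' ` A' \<and> the_inv_into A' f' y = the_inv_into A f y"
proof -
  obtain x where x: "x \<in> A" "y = f x" using yA by auto
  have "dist x y \<le> r" using pr(1) x unfolding partial_r_translation_def by auto
  then have "dist x0 x \<le> n" using dist_triangle[of x0 x y] y by (simp add: dist_commute)
  then have xA': "x \<in> A'" "f' x = f x" using ag x(1) unfolding agree_def by auto
  have i: "inj_on f A" "inj_on f' A'" using pr unfolding partial_r_translation_def by auto
  show ?thesis using xA' x the_inv_into_f_f[OF i(1) x(1)] the_inv_into_f_f[OF i(2) xA'(1)]
    by (metis image_eqI)
qed

lemma vf_local:
  assumes pr: "partial_r_translation r A f" "partial_r_translation r A' f'" and ag: "agree x0 n A f A' f'"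
    and y: "dist x0 y + r \<le> n"
  shows "vf A' f' \<zeta> y = vf A f \<zeta> y"
proof (cases "y \<in> f ` A")
  case True
  then show ?thesis using vf_local1[OF pr ag y True] unfolding vf_def by simp
next
  case False
  have "y \<notin> f' ` A'" using vf_local1[OF pr(2,1) agree_sym[OF ag] y] False by blast
  then show ?thesis using False unfolding vf_def by simp
qed

lemma sq_diff_le: "(cmod (a - b))\<^sup>2 \<le> 2 * (cmod a)\<^sup>2 + 2 * (cmod b)\<^sup>2"
proof -
  have "(cmod (a - b))\<^sup>2 \<le> (cmod a + cmod b)\<^sup>2"
    by (rule power_mono[OF norm_triangle_ineq4]) simp
  moreover have "(cmod a + cmod b)\<^sup>2 \<le> 2 * (cmod a)\<^sup>2 + 2 * (cmod b)\<^sup>2"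
    using zero_le_power2[of "cmod a - cmod b"] by (simp add: power2_eq_square algebra_simps)
  ultimately show ?thesis by linarith
qed

lemma finite_dist_bound: "finite G \<Longrightarrow> \<exists>R. \<forall>x\<in>G. dist x0 x \<le> R"
  by (rule exI[of _ "sum (dist x0) G"]) (auto intro: member_le_sum)

lemma vf_conv:
  assumes pr: "partial_r_translation r A f" and prn: "\<And>n. partial_r_translation r (An n) (fn n)"
    and ag: "\<And>n. agree x0 (real n) A f (An n) (fn n)" and \<xi>: "\<xi> \<in> ell2"
  shows "(\<lambda>n. l2norm (\<lambda>y. vf (An n) (fn n) \<xi> y - vf A f \<xi> y)) \<longlonglongrightarrow> 0"
proof (rule LIMSEQ_I)
  fix e :: real assume e: "e > 0"
  obtain G where G: "finite G" "\<And>H. finite H \<Longrightarrow> H \<inter> G = {} \<Longrightarrow> sum (sqn \<xi>) H \<le> e\<^sup>2 / 16"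
    using ell2_tail[OF \<xi>, of "e\<^sup>2 / 16"] e by auto
  obtain R where R: "\<And>x. x \<in> G \<Longrightarrow> dist x0 x \<le> R" using finite_dist_bound[OF G(1)] by blast
  define N where "N = nat \<lceil>R + 2 * r\<rceil>"
  have P: "l2norm (\<lambda>y. vf (An n) (fn n) \<xi> y - vf A f \<xi> y) \<le> e / 2" if n: "n \<ge> N" for n
  proof -
    have nR: "R + 2 * r \<le> real n" using n unfolding N_def by linarith
    have tailsum: "sum (sqn (vf B g \<xi>)) H' \<le> e\<^sup>2 / 16"
      if Bg: "partial_r_translation r B g" and H': "finite H'" "\<And>y. y \<in> H' \<Longrightarrow> real n < dist x0 y + r" for B g H'
    proof -
      have inj: "inj_on g B" using Bg unfolding partial_r_translation_def by auto
      have "{x\<in>B. g x \<in> H'} \<inter> G = {}"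
      proof (rule ccontr)
        assume "{x\<in>B. g x \<in> H'} \<inter> G \<noteq> {}"
        then obtain x where x: "x \<in> B" "g x \<in> H'" "x \<in> G" by auto
        have "dist x (g x) \<le> r" using Bg x(1) unfolding partial_r_translation_def by auto
        moreover have "dist x0 (g x) \<le> dist x0 x + dist x (g x)" by (rule dist_triangle)
        moreover have "real n < dist x0 (g x) + r" using H'(2)[OF x(2)] .
        moreover have "dist x0 x \<le> R" using R[OF x(3)] .
        ultimately show False using nR by linarith
      qed
      then show ?thesis using vf_sum(2)[OF inj H'(1), of \<xi>] vf_sum(1)[OF inj H'(1)] G(2) by auto
    qed
    have "sum (sqn (\<lambda>y. vf (An n) (fn n) \<xi> y - vf A f \<xi> y)) H \<le> (e / 2)\<^sup>2" if H: "finite H" for H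
    proof -
      define H' where "H' = {y\<in>H. real n < dist x0 y + r}"
      have fH': "finite H'" using H unfolding H'_def by simp
      have "sum (sqn (\<lambda>y. vf (An n) (fn n) \<xi> y - vf A f \<xi> y)) H
          \<le> sum (\<lambda>y. if real n < dist x0 y + r then 2 * sqn (vf (An n) (fn n) \<xi>) y + 2 * sqn (vf A f \<xi>) y else 0) H"
      proof (rule sum_mono)
        fix y assume "y \<in> H"
        show "sqn (\<lambda>y. vf (An n) (fn n) \<xi> y - vf A f \<xi> y) y
          \<le> (if real n < dist x0 y + r then 2 * sqn (vf (An n) (fn n) \<xi>) y + 2 * sqn (vf A f \<xi>) y else 0)"
        proof (cases "real n < dist x0 y + r")
          case True then show ?thesis using sq_diff_le by simp
        next
          case False
          then have "vf (An n) (fn n) \<xi> y = vf A f \<xi> y" using vf_local[OF pr prn ag] by simp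
          then show ?thesis using False by simp
        qed
      qed
      also have "\<dots> = sum (\<lambda>y. 2 * sqn (vf (An n) (fn n) \<xi>) y + 2 * sqn (vf A f \<xi>) y) H'"
        unfolding H'_def using H by (simp add: sum.inter_filter)
      also have "\<dots> = 2 * sum (sqn (vf (An n) (fn n) \<xi>)) H' + 2 * sum (sqn (vf A f \<xi>)) H'"
        by (simp add: sum.distrib sum_distrib_left)
      also have "\<dots> \<le> 2 * (e\<^sup>2 / 16) + 2 * (e\<^sup>2 / 16)"
        using tailsum[OF prn[of n] fH'] tailsum[OF pr fH'] unfolding H'_def by (intro add_mono) auto
      also have "\<dots> = (e / 2)\<^sup>2" by (simp add: power2_eq_square)
      finally show ?thesis .
    qed
    from ell2_by_finite_sums'(2)[of _ "e / 2", OF this] e show ?thesis by simp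
  qed
  have "norm (l2norm (\<lambda>y. vf (An n) (fn n) \<xi> y - vf A f \<xi> y) - 0) < e" if "n \<ge> N" for n
    using P[OF that] e l2norm_nonneg[of "\<lambda>y. vf (An n) (fn n) \<xi> y - vf A f \<xi> y"] by simp
  then show "\<exists>no. \<forall>n\<ge>no. norm (l2norm (\<lambda>y. vf (An n) (fn n) \<xi> y - vf A f \<xi> y) - 0) < e"
    by blast
qed

lemma LSC:
  assumes co: "closed_operator D h" and inv: "domain_invariant D"
    and pr: "partial_r_translation r A f" and prn: "\<And>n. partial_r_translation r (An n) (fn n)"
    and ag: "\<And>n. agree x0 (real n) A f (An n) (fn n)" and \<xi>: "\<xi> \<in> D"
    and bd: "\<And>n. l2norm (cm h (An n) (fn n) \<xi>) \<le> M"
  shows "l2norm (cm h A f \<xi>) \<le> M"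
proof -
  have pt: "partial_translation A f" using prt_pt[OF pr] .
  have ptn: "partial_translation (An n) (fn n)" for n using prt_pt[OF prn] .
  define a where "a n = vf (An n) (fn n) \<xi>" for n
  define a0 where "a0 = vf A f \<xi>"
  have aD: "a n \<in> D" for n unfolding a_def by (rule vf_D[OF inv ptn \<xi>])
  have a0D: "a0 \<in> D" unfolding a0_def by (rule vf_D[OF inv pt \<xi>])
  define w where "w n = (\<lambda>y. a n y - a0 y)" for n
  have wD: "w n \<in> D" and hw: "h (w n) = (\<lambda>y. h (a n) y - h a0 y)" for n
    using co_diff[OF co aD a0D] unfolding w_def by auto
  have wl: "(\<lambda>n. l2norm (w n)) \<longlonglongrightarrow> 0"
    unfolding w_def a_def a0_def by (rule vf_conv[OF pr prn ag co_D[OF co \<xi>]])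
  have hxi: "h \<xi> \<in> ell2" by (rule co_h[OF co \<xi>])
  have han: "l2norm (h (a n)) \<le> M + l2norm (h \<xi>)" for n
  proof -
    have e: "h (a n) = (\<lambda>y. cm h (An n) (fn n) \<xi> y + vf (An n) (fn n) (h \<xi>) y)"
      unfolding cm_def a_def by simp
    have "l2norm (h (a n)) \<le> l2norm (cm h (An n) (fn n) \<xi>) + l2norm (vf (An n) (fn n) (h \<xi>))"
      unfolding e by (rule ell2_add(2)[OF cm_ell2[OF co inv ptn \<xi>] vf_ell2(1)[OF pt_inj[OF ptn] hxi]])
    then show ?thesis using bd[of n] vf_ell2(2)[OF pt_inj[OF ptn] hxi, of n] by linarith
  qed
  have hwK: "l2norm (h (w n)) \<le> M + l2norm (h \<xi>) + l2norm (h a0)" for n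
    unfolding hw using ell2_diff(2)[OF co_h[OF co aD] co_h[OF co a0D], of n] han[of n] by linarith
  have cw: "(\<lambda>n. h (w n) y) \<longlonglongrightarrow> 0" for y by (rule CW[OF co wD wl hwK])
  have lim: "(\<lambda>n. cm h (An n) (fn n) \<xi> y) \<longlonglongrightarrow> cm h A f \<xi> y" for y
  proof -
    have l1: "(\<lambda>n. h (a n) y) \<longlonglongrightarrow> h a0 y"
    proof -
      have "(\<lambda>n. h (w n) y + h a0 y) \<longlonglongrightarrow> 0 + h a0 y" by (intro tendsto_add cw tendsto_const)
      then show ?thesis unfolding hw by simp
    qed
    have l2: "(\<lambda>n. vf (An n) (fn n) (h \<xi>) y) \<longlonglongrightarrow> vf A f (h \<xi>) y"
    proof (rule tendsto_eventually)
      show "\<forall>\<^sub>F n in sequentially. vf (An n) (fn n) (h \<xi>) y = vf A f (h \<xi>) y"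
        unfolding eventually_sequentially
      proof (intro exI allI impI)
        fix n assume "nat \<lceil>dist x0 y + r\<rceil> \<le> n"
        then have "dist x0 y + r \<le> real n" by linarith
        then show "vf (An n) (fn n) (h \<xi>) y = vf A f (h \<xi>) y" by (rule vf_local[OF pr prn ag])
      qed
    qed
    show ?thesis unfolding cm_def using tendsto_diff[OF l1 l2] unfolding a_def a0_def by simp
  qed
  show ?thesis
    by (rule ell2_fatou(2)[of "\<lambda>n. cm h (An n) (fn n) \<xi>", OF cm_ell2[OF co inv ptn \<xi>] bd lim])
qed



lemma agree_mono: "agree x0 n A f A' f' \<Longrightarrow> m \<le> n \<Longrightarrow> agree x0 m A f A' f'"
  unfolding agree_def by auto

lemma agree_trans: "agree x0 n A f A' f' \<Longrightarrow> agree x0 n A' f' A'' f'' \<Longrightarrow> agree x0 n A f A'' f''"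
  unfolding agree_def by auto

lemma OPEN:
  assumes co: "closed_operator D h" and inv: "domain_invariant D"
    and pr: "partial_r_translation r A f" and \<xi>: "\<xi> \<in> D" and gt: "l2norm (cm h A f \<xi>) > M"
  shows "\<exists>n::nat. \<forall>A'' f''. partial_r_translation r A'' f'' \<and> agree x0 (real n) A f A'' f'' \<longrightarrow> l2norm (cm h A'' f'' \<xi>) > M"
proof (rule ccontr)
  assume "\<not> ?thesis"
  then have "\<forall>n::nat. \<exists>A'' f''. partial_r_translation r A'' f'' \<and> agree x0 (real n) A f A'' f'' \<and> l2norm (cm h A'' f'' \<xi>) \<le> M"
    by (auto simp: not_less)
  then obtain An fn where P: "\<And>n. partial_r_translation r (An n) (fn n) \<and> agree x0 (real n) A f (An n) (fn n) \<and> l2norm (cm h (An n) (fn n) \<xi>) \<le> M"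
    by metis
  have "l2norm (cm h A f \<xi>) \<le> M"
    by (rule LSC[OF co inv pr _ _ \<xi>]) (use P in auto)
  then show False using gt by simp
qed

lemma FINB:
  fixes F :: "'a::metric_space set" and D :: "('a \<Rightarrow> complex) set"
  assumes coarse: "\<And>A f. partial_translation A f \<Longrightarrow> comm_norm D h A f < \<infinity>"
    and F: "finite F" and fin: "\<And>x::'a. finite (cball x r)"
  shows "\<exists>K<\<infinity>. \<forall>B g. B \<subseteq> F \<and> partial_r_translation r B g \<longrightarrow> comm_norm D h B g \<le> K"
proof -
  define F3 where "F3 = (\<Union>x\<in>F. cball x r)"
  have fF3: "finite F3" unfolding F3_def by (rule finite_UN_I[OF F fin])
  define P where "P = {(B, restrict g B) | B g. B \<subseteq> F \<and> partial_r_translation r B g}"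
  have "P \<subseteq> Pow F \<times> PiE F (\<lambda>_. insert undefined F3)"
  proof
    fix p assume "p \<in> P"
    then obtain B g where p: "p = (B, restrict g B)" "B \<subseteq> F" "partial_r_translation r B g" unfolding P_def by blast
    have "restrict g B \<in> PiE F (\<lambda>_. insert undefined F3)"
    proof -
      have "g x \<in> F3" if "x \<in> B" for x
        using p(2,3) that unfolding F3_def partial_r_translation_def by auto
      then show ?thesis using p(2) unfolding PiE_def Pi_def extensional_def by auto
    qed
    then show "p \<in> Pow F \<times> PiE F (\<lambda>_. insert undefined F3)" using p by auto
  qed
  then have fP: "finite P" by (rule finite_subset) (use F fF3 in \<open>auto intro!: finite_PiE\<close>)
  define K where "K = (\<Sum>p\<in>P. comm_norm D h (fst p) (snd p))"
  have "\<forall>p\<in>P. comm_norm D h (fst p) (snd p) < \<infinity>"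
  proof
    fix p assume "p \<in> P"
    then obtain B g where p: "p = (B, restrict g B)" "partial_r_translation r B g" unfolding P_def by blast
    have "comm_norm D h B (restrict g B) = comm_norm D h B g" by (rule comm_norm_cong) simp
    then show "comm_norm D h (fst p) (snd p) < \<infinity>" using coarse[OF prt_pt[OF p(2)]] p(1) by simp
  qed
  then have "K < \<infinity>" unfolding K_def using ennreal_sum_less_top[OF fP, of "\<lambda>p. comm_norm D h (fst p) (snd p)"] by simp
  moreover have "comm_norm D h B g \<le> K" if "B \<subseteq> F" "partial_r_translation r B g" for B g
  proof -
    have m: "(B, restrict g B) \<in> P" using that unfolding P_def by blast
    have "comm_norm D h B g = comm_norm D h B (restrict g B)" by (rule comm_norm_cong) simp
    also have "\<dots> \<le> K" unfolding K_def using member_le_sum[OF m, of "\<lambda>p. comm_norm D h (fst p) (snd p)"] fP by simp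
    finally show ?thesis .
  qed
  ultimately show ?thesis by blast
qed

lemma MOD:
  fixes x0 :: "'a::metric_space" and D :: "('a \<Rightarrow> complex) set"
  assumes co: "closed_operator D h" and inv: "domain_invariant D"
    and coarse: "\<And>A f. partial_translation A f \<Longrightarrow> comm_norm D h A f < \<infinity>"
    and fin: "\<And>(x::'a) R. finite (cball x R)" and r: "r \<ge> 0"
    and pr0: "partial_r_translation r A0 f0"
  shows "\<exists>K<\<infinity>. \<forall>A f. partial_r_translation r A f \<longrightarrow>
     (\<exists>A'' f''. partial_r_translation r A'' f'' \<and> agree x0 n A0 f0 A'' f'' \<and> comm_norm D h A f \<le> comm_norm D h A'' f'' + K)"
proof -
  define F where "F = cball x0 n"
  define F2 where "F2 = cball x0 (n + 2 * r)"
  have fF2: "finite F2" unfolding F2_def by (rule fin)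
  obtain K0 where K0: "K0 < \<infinity>" "\<And>B g. B \<subseteq> F2 \<Longrightarrow> partial_r_translation r B g \<Longrightarrow> comm_norm D h B g \<le> K0"
    using FINB[OF coarse fF2 fin[of _ r]] by blast
  have inj0: "inj_on f0 A0" using pr0 unfolding partial_r_translation_def by auto
  have dA0: "\<And>x. x \<in> A0 \<Longrightarrow> dist x (f0 x) \<le> r" using pr0 unfolding partial_r_translation_def by auto
  have FF2: "F \<subseteq> F2" unfolding F_def F2_def using r by auto
  have b1: "comm_norm D h (A0 \<inter> F) f0 \<le> K0"
    by (rule K0(2)) (use FF2 prt_subset[OF pr0] in auto)
  have main: "\<exists>A'' f''. partial_r_translation r A'' f'' \<and> agree x0 n A0 f0 A'' f'' \<and> comm_norm D h A f \<le> comm_norm D h A'' f'' + (K0 + K0)"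
    if pr: "partial_r_translation r A f" for A f
  proof -
    define C where "C = {x \<in> A - F. f x \<in> f0 ` (A0 \<inter> F)}"
    define A1 where "A1 = A - F - C"
    define A'' where "A'' = (A0 \<inter> F) \<union> A1"
    define f'' where "f'' = (\<lambda>x. if x \<in> F then f0 x else f x)"
    have inj: "inj_on f A" using pr unfolding partial_r_translation_def by auto
    have dA: "\<And>x. x \<in> A \<Longrightarrow> dist x (f x) \<le> r" using pr unfolding partial_r_translation_def by auto
    have A1F: "x \<in> A1 \<Longrightarrow> x \<notin> F \<and> x \<in> A \<and> f x \<notin> f0 ` (A0 \<inter> F)" for x
      unfolding A1_def C_def by auto
    have f1: "x \<in> F \<Longrightarrow> f'' x = f0 x" "x \<notin> F \<Longrightarrow> f'' x = f x" for x
      unfolding f''_def by auto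
    have memA'': "x \<in> A'' \<longleftrightarrow> (x \<in> A0 \<and> x \<in> F) \<or> x \<in> A1" for x
      unfolding A''_def by auto
    have injA'': "inj_on f'' A''"
    proof (rule inj_onI)
      fix x x' assume x: "x \<in> A''" "x' \<in> A''" and e: "f'' x = f'' x'"
      show "x = x'"
      proof (cases "x \<in> F")
        case xF: True
        then have xA0: "x \<in> A0" using x(1) memA'' A1F by blast
        show ?thesis
        proof (cases "x' \<in> F")
          case True
          then have "x' \<in> A0" using x(2) memA'' A1F by blast
          then show ?thesis using xA0 e f1 xF True inj0 unfolding inj_on_def by metis
        next
          case False
          then have x'1: "x' \<in> A1" using x(2) memA'' by blast
          have "f x' = f0 x" using e f1 xF False by simp
          then have "f x' \<in> f0 ` (A0 \<inter> F)" using xA0 xF by blast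
          then show ?thesis using A1F[OF x'1] by blast
        qed
      next
        case xF: False
        then have x1: "x \<in> A1" using x(1) memA'' by blast
        show ?thesis
        proof (cases "x' \<in> F")
          case True
          then have x'A0: "x' \<in> A0" using x(2) memA'' A1F by blast
          have "f x = f0 x'" using e f1 xF True by simp
          then have "f x \<in> f0 ` (A0 \<inter> F)" using x'A0 True by blast
          then show ?thesis using A1F[OF x1] by blast
        next
          case False
          then have "x' \<in> A1" using x(2) memA'' by blast
          then show ?thesis using x1 A1F e f1 xF False inj unfolding inj_on_def by metis
        qed
      qed
    qed
    have pr'': "partial_r_translation r A'' f''"
      unfolding partial_r_translation_def
    proof
      show "inj_on f'' A''" by (rule injA'')
      show "\<forall>x\<in>A''. dist x (f'' x) \<le> r"
      proof
        fix x assume "x \<in> A''"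
        then show "dist x (f'' x) \<le> r" unfolding memA''
        proof
          assume "x \<in> A0 \<and> x \<in> F" then show ?thesis using dA0 f1 by simp
        next
          assume "x \<in> A1" then show ?thesis using dA f1 A1F by simp
        qed
      qed
    qed
    have ag: "agree x0 n A0 f0 A'' f''" unfolding agree_def
    proof
      fix x assume "x \<in> cball x0 n"
      then have xF: "x \<in> F" unfolding F_def .
      have "x \<notin> A1" using A1F xF by blast
      then have "x \<in> A0 \<longleftrightarrow> x \<in> A''" using memA'' xF by blast
      moreover have "f0 x = f'' x" using f1(1)[OF xF] by simp
      ultimately show "(x \<in> A0 \<longleftrightarrow> x \<in> A'') \<and> (x \<in> A0 \<longrightarrow> f0 x = f'' x)" by blast
    qed
    have ptA: "partial_translation A f" by (rule prt_pt[OF pr])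
    have ptA'': "partial_translation A'' f''" by (rule prt_pt[OF pr''])
    have s1: "comm_norm D h A f \<le> comm_norm D h A1 f + comm_norm D h (A \<inter> F \<union> C) f"
    proof (rule comm_norm_split(1)[OF co inv ptA])
      show "A = A1 \<union> (A \<inter> F \<union> C)" unfolding A1_def C_def by blast
      show "A1 \<inter> (A \<inter> F \<union> C) = {}" unfolding A1_def by blast
    qed
    have e1: "comm_norm D h A1 f = comm_norm D h A1 f''" by (rule comm_norm_cong) (use A1F f1 in auto)
    have s2: "comm_norm D h A1 f'' \<le> comm_norm D h A'' f'' + comm_norm D h (A0 \<inter> F) f''"
    proof (rule comm_norm_split(2)[OF co inv ptA''])
      show "A'' = A1 \<union> (A0 \<inter> F)" unfolding A''_def by blast
      show "A1 \<inter> (A0 \<inter> F) = {}" using A1F by blast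
    qed
    have e2: "comm_norm D h (A0 \<inter> F) f'' = comm_norm D h (A0 \<inter> F) f0" by (rule comm_norm_cong) (use f1 in auto)
    have CF2: "A \<inter> F \<union> C \<subseteq> F2"
    proof
      fix x assume "x \<in> A \<inter> F \<union> C"
      then show "x \<in> F2"
      proof
        assume "x \<in> A \<inter> F" then show ?thesis using FF2 by auto
      next
        assume "x \<in> C"
        then obtain z where z: "x \<in> A" "z \<in> A0" "z \<in> F" "f x = f0 z" unfolding C_def by auto
        have t1: "dist x0 x \<le> dist x0 z + dist z x" by (rule dist_triangle)
        have t2: "dist z x \<le> dist z (f0 z) + dist (f0 z) x" by (rule dist_triangle)
        have "dist x0 z \<le> n" using z(3) unfolding F_def by auto
        moreover have "dist z (f0 z) \<le> r" using dA0[OF z(2)] .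
        moreover have "dist (f0 z) x \<le> r" using dA[OF z(1)] z(4) by (simp add: dist_commute)
        ultimately have "dist x0 x \<le> n + 2 * r" using t1 t2 by linarith
        then show ?thesis unfolding F2_def by auto
      qed
    qed
    have b2: "comm_norm D h (A \<inter> F \<union> C) f \<le> K0"
    proof (rule K0(2)[OF CF2])
      show "partial_r_translation r (A \<inter> F \<union> C) f" by (rule prt_subset[OF pr]) (auto simp: C_def)
    qed
    have "comm_norm D h A f \<le> comm_norm D h A1 f + K0" using s1 b2 by (metis add_left_mono order_trans)
    also have "\<dots> \<le> (comm_norm D h A'' f'' + K0) + K0"
    proof -
      have "comm_norm D h A1 f \<le> comm_norm D h A'' f'' + K0"
        using s2 e1 e2 b1 by (metis add_left_mono order_trans)
      then show ?thesis by (rule add_right_mono)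
    qed
    finally have "comm_norm D h A f \<le> comm_norm D h A'' f'' + (K0 + K0)" by (simp add: add.assoc)
    then show ?thesis using pr'' ag by blast
  qed
  have "K0 + K0 < \<infinity>" using K0(1) by simp
  then show ?thesis using main by blast
qed

lemma BAD:
  fixes x0 :: "'a::metric_space" and D :: "('a \<Rightarrow> complex) set"
  assumes co: "closed_operator D h" and inv: "domain_invariant D"
    and coarse: "\<And>A f. partial_translation A f \<Longrightarrow> comm_norm D h A f < \<infinity>"
    and fin: "\<And>(x::'a) R. finite (cball x R)" and r: "r \<ge> 0"
    and big: "(SUP (A, f)\<in>{(A, f). partial_r_translation r A f}. comm_norm D h A f) = \<infinity>"
    and pr0: "partial_r_translation r A0 f0"
  shows "\<exists>A'' f''. partial_r_translation r A'' f'' \<and> agree x0 n A0 f0 A'' f'' \<and> comm_norm D h A'' f'' > ennreal M"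
proof -
  obtain K where K: "K < \<infinity>" "\<And>A f. partial_r_translation r A f \<Longrightarrow>
     (\<exists>A'' f''. partial_r_translation r A'' f'' \<and> agree x0 n A0 f0 A'' f'' \<and> comm_norm D h A f \<le> comm_norm D h A'' f'' + K)"
    using MOD[OF co inv coarse fin r pr0, of x0 n] by blast
  have "ennreal M + K < (SUP (A, f)\<in>{(A, f). partial_r_translation r A f}. comm_norm D h A f)"
    unfolding big using K(1) by simp
  then obtain A f where Af: "partial_r_translation r A f" "ennreal M + K < comm_norm D h A f"
    unfolding less_SUP_iff by auto
  obtain A'' f'' where A'': "partial_r_translation r A'' f''" "agree x0 n A0 f0 A'' f''" "comm_norm D h A f \<le> comm_norm D h A'' f'' + K"
    using K(2)[OF Af(1)] by blast
  have "comm_norm D h A'' f'' > ennreal M"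
  proof (rule ccontr)
    assume "\<not> ?thesis"
    then have "comm_norm D h A'' f'' + K \<le> ennreal M + K" by (intro add_right_mono) (simp add: not_less)
    then have "comm_norm D h A f \<le> ennreal M + K" using A''(3) by (rule order_trans[rotated])
    then show False using Af(2) by simp
  qed
  then show ?thesis using A'' by blast
qed



lemma nlt_top: "\<not> (a::ennreal) < top \<Longrightarrow> a = top"
  using less_top by blast

lemma agree_refl: "agree x0 n A f A f"
  unfolding agree_def by auto

lemma ulf_fin:
  assumes "uniformly_locally_finite TYPE('a::metric_space)"
  shows "finite (cball (x::'a) R)"
proof -
  have f1: "finite (cball (y::'a) 1)" for y
    using assms unfolding uniformly_locally_finite_def by (meson zero_less_one)
  show ?thesis
  proof (cases "R > 0")
    case True
    then show ?thesis using assms unfolding uniformly_locally_finite_def by meson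
  next
    case False
    then have "cball x R \<subseteq> cball x 1" by auto
    then show ?thesis using f1 finite_subset by blast
  qed
qed

theorem proposition4p1p4:
  fixes D :: "('a::metric_space \<Rightarrow> complex) set"
    and h :: "('a \<Rightarrow> complex) \<Rightarrow> ('a \<Rightarrow> complex)"
  assumes "uniformly_locally_finite TYPE('a)"
    and "closed_operator D h"
    and "domain_invariant D"
  shows "coarse_operator D h \<longleftrightarrow>
    (\<forall>r>0. (SUP (A, f)\<in>{(A, f). partial_r_translation r A f}. comm_norm D h A f) < \<infinity>)"
proof
  assume "coarse_operator D h"
  then have co: "closed_operator D h" and inv: "domain_invariant D"
    and cf: "\<And>A f. partial_translation A f \<Longrightarrow> comm_norm D h A f < \<infinity>"
    unfolding coarse_operator_def by auto
  have fin: "\<And>(x::'a) R. finite (cball x R)" by (rule ulf_fin[OF assms(1)])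
  show "\<forall>r>0. (SUP (A, f)\<in>{(A, f). partial_r_translation r A f}. comm_norm D h A f) < \<infinity>"
  proof (intro allI impI)
    fix r :: real assume r: "r > 0"
    show "(SUP (A, f)\<in>{(A, f). partial_r_translation r A f}. comm_norm D h A f) < \<infinity>"
    proof (rule ccontr)
      assume "\<not> ?thesis"
      then have big: "(SUP (A, f)\<in>{(A, f). partial_r_translation r A f}. comm_norm D h A f) = \<infinity>"
        unfolding infinity_ennreal_def by (rule nlt_top)
      define x0 :: 'a where "x0 = undefined"
      define Q where "Q s k t \<longleftrightarrow> (partial_r_translation r (fst (snd s)) (snd (snd s)) \<longrightarrow>
          fst s \<le> fst t \<and> partial_r_translation r (fst (snd t)) (snd (snd t)) \<and>
          agree x0 (real (fst s)) (fst (snd s)) (snd (snd s)) (fst (snd t)) (snd (snd t)) \<and>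
          (\<forall>A'' f''. partial_r_translation r A'' f'' \<and> agree x0 (real (fst t)) (fst (snd t)) (snd (snd t)) A'' f''
              \<longrightarrow> ennreal (real k) < comm_norm D h A'' f''))"
        for s :: "nat \<times> 'a set \<times> ('a \<Rightarrow> 'a)" and k :: nat and t :: "nat \<times> 'a set \<times> ('a \<Rightarrow> 'a)"
      have step: "\<exists>t. Q s k t" for s k
      proof (cases "partial_r_translation r (fst (snd s)) (snd (snd s))")
        case False
        then show ?thesis unfolding Q_def by blast
      next
        case True
        obtain n A f where s: "s = (n, A, f)" by (cases s) auto
        have pr: "partial_r_translation r A f" using True s by simp
        obtain A' f' where A': "partial_r_translation r A' f'" "agree x0 (real n) A f A' f'"
          "comm_norm D h A' f' > ennreal (real k)"
          using BAD[OF co inv cf fin _ big pr, of x0 "real n" "real k"] r by auto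
        then obtain \<xi> where \<xi>: "\<xi> \<in> D" "l2norm \<xi> \<le> 1" "ennreal (real k) < ennreal (l2norm (cm h A' f' \<xi>))"
          unfolding comm_norm_cm less_SUP_iff by auto
        have gt: "l2norm (cm h A' f' \<xi>) > real k" using \<xi>(3) by (simp add: ennreal_less_iff)
        obtain n1 :: nat where n1: "\<And>A'' f''. partial_r_translation r A'' f'' \<Longrightarrow> agree x0 (real n1) A' f' A'' f'' \<Longrightarrow>
            l2norm (cm h A'' f'' \<xi>) > real k"
          using OPEN[OF co inv A'(1) \<xi>(1) gt, of x0] by blast
        define n' where "n' = max n n1"
        have "ennreal (real k) < comm_norm D h A'' f''"
          if "partial_r_translation r A'' f''" "agree x0 (real n') A' f' A'' f''" for A'' f''
        proof -
          have "agree x0 (real n1) A' f' A'' f''" using agree_mono[OF that(2)] unfolding n'_def by simp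
          then have "real k < l2norm (cm h A'' f'' \<xi>)" using n1 that(1) by blast
          then have "ennreal (real k) < ennreal (l2norm (cm h A'' f'' \<xi>))" by (simp add: ennreal_less_iff)
          also have "\<dots> \<le> comm_norm D h A'' f''" unfolding comm_norm_cm using \<xi>(1,2) by (intro SUP_upper) auto
          finally show ?thesis .
        qed
        then have "Q s k (n', A', f')" unfolding Q_def s using A' unfolding n'_def by auto
        then show ?thesis by blast
      qed
      then obtain G where G: "\<And>s k. Q s k (G s k)" by metis
      define st where "st = rec_nat (0::nat, {}::'a set, id::'a\<Rightarrow>'a) (\<lambda>k s. G s k)"
      have st0: "st 0 = (0, {}, id)" and stS: "st (Suc k) = G (st k) k" for k unfolding st_def by simp_all
      define N where "N k = fst (st k)" for k
      define AA where "AA k = fst (snd (st k))" for k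
      define FF where "FF k = snd (snd (st k))" for k
      have prAll: "partial_r_translation r (AA k) (FF k)" for k
      proof (induction k)
        case 0 then show ?case unfolding AA_def FF_def st0 partial_r_translation_def by simp
      next
        case (Suc k)
        then show ?case using G[of "st k" k] unfolding Q_def AA_def FF_def stS by blast
      qed
      have props: "N k \<le> N (Suc k) \<and> agree x0 (real (N k)) (AA k) (FF k) (AA (Suc k)) (FF (Suc k)) \<and>
          (\<forall>A'' f''. partial_r_translation r A'' f'' \<and> agree x0 (real (N (Suc k))) (AA (Suc k)) (FF (Suc k)) A'' f''
              \<longrightarrow> ennreal (real k) < comm_norm D h A'' f'')" for k
        using G[of "st k" k] prAll[of k] unfolding Q_def N_def AA_def FF_def stS by blast
      have Nmono: "N k \<le> N j" if "k \<le> j" for k j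
        by (rule lift_Suc_mono_le[OF _ that]) (rule props[THEN conjunct1])
      have chain: "agree x0 (real (N k)) (AA k) (FF k) (AA j) (FF j)" if "k \<le> j" for k j
        using that
      proof (induction j rule: dec_induct)
        case base then show ?case by (rule agree_refl)
      next
        case (step j)
        have a: "agree x0 (real (N j)) (AA j) (FF j) (AA (Suc j)) (FF (Suc j))"
          by (rule props[of j, THEN conjunct2, THEN conjunct1])
        have "real (N k) \<le> real (N j)" using Nmono[OF step(1)] by simp
        then have "agree x0 (real (N k)) (AA j) (FF j) (AA (Suc j)) (FF (Suc j))"
          by (rule agree_mono[OF a])
        then show ?case using step(3) by (rule agree_trans[rotated])
      qed
      define kx where "kx x = (LEAST k. dist x0 x \<le> real (N k))" for x
      define Ainf where "Ainf = {x. (\<exists>k. dist x0 x \<le> real (N k)) \<and> x \<in> AA (kx x)}"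
      define finf where "finf x = FF (kx x) x" for x
      have agInf: "agree x0 (real (N k)) (AA k) (FF k) Ainf finf" for k
        unfolding agree_def
      proof
        fix x assume "x \<in> cball x0 (real (N k))"
        then have xk: "dist x0 x \<le> real (N k)" by simp
        have le: "kx x \<le> k" unfolding kx_def by (rule Least_le) (rule xk)
        have xkx: "dist x0 x \<le> real (N (kx x))" unfolding kx_def by (rule LeastI) (rule xk)
        have ag: "agree x0 (real (N (kx x))) (AA (kx x)) (FF (kx x)) (AA k) (FF k)" by (rule chain[OF le])
        then have e: "x \<in> AA (kx x) \<longleftrightarrow> x \<in> AA k" "x \<in> AA (kx x) \<Longrightarrow> FF (kx x) x = FF k x"
          using xkx unfolding agree_def by auto
        have "x \<in> Ainf \<longleftrightarrow> x \<in> AA (kx x)" unfolding Ainf_def using xk by blast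
        then show "(x \<in> AA k \<longleftrightarrow> x \<in> Ainf) \<and> (x \<in> AA k \<longrightarrow> FF k x = finf x)"
          using e unfolding finf_def by auto
      qed
      have memI: "x \<in> Ainf \<Longrightarrow> x \<in> AA (kx x) \<and> dist x0 x \<le> real (N (kx x))" for x
        unfolding Ainf_def kx_def by (auto intro: LeastI)
      have prInf: "partial_r_translation r Ainf finf"
        unfolding partial_r_translation_def
      proof
        show "inj_on finf Ainf"
        proof (rule inj_onI)
          fix x x' assume x: "x \<in> Ainf" "x' \<in> Ainf" "finf x = finf x'"
          define k where "k = max (kx x) (kx x')"
          have "dist x0 x \<le> real (N k)" using memI[OF x(1)] Nmono[of "kx x" k] unfolding k_def by force
          then have a1: "x \<in> AA k" "FF k x = finf x" using agInf[of k] x(1) unfolding agree_def by auto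
          have "dist x0 x' \<le> real (N k)" using memI[OF x(2)] Nmono[of "kx x'" k] unfolding k_def by force
          then have a2: "x' \<in> AA k" "FF k x' = finf x'" using agInf[of k] x(2) unfolding agree_def by auto
          have "inj_on (FF k) (AA k)" using prAll[of k] unfolding partial_r_translation_def by blast
          then show "x = x'" using a1 a2 x(3) unfolding inj_on_def by metis
        qed
        show "\<forall>x\<in>Ainf. dist x (finf x) \<le> r"
          using memI prAll unfolding finf_def partial_r_translation_def by blast
      qed
      have gtall: "ennreal (real k) < comm_norm D h Ainf finf" for k
        using props[of k, THEN conjunct2, THEN conjunct2] prInf agInf[of "Suc k"] by blast
      have "comm_norm D h Ainf finf < top" using cf[OF prt_pt[OF prInf]] by simp
      then obtain c where c: "c \<ge> 0" "comm_norm D h Ainf finf = ennreal c"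
        unfolding less_top_ennreal by blast
      have "ennreal (real (nat \<lceil>c\<rceil>)) < ennreal c" using gtall[of "nat \<lceil>c\<rceil>"] unfolding c(2) .
      then have "real (nat \<lceil>c\<rceil>) < c" by (simp add: ennreal_less_iff)
      then show False by linarith
    qed
  qed
next
  assume H: "\<forall>r>0. (SUP (A, f)\<in>{(A, f). partial_r_translation r A f}. comm_norm D h A f) < \<infinity>"
  have "comm_norm D h A f < \<infinity>" if pt: "partial_translation A f" for A f
  proof -
    obtain c where c: "\<forall>x\<in>A. dist x (f x) \<le> c" and inj: "inj_on f A"
      using pt unfolding partial_translation_def by blast
    define r where "r = max c 1"
    have r: "r > 0" unfolding r_def by simp
    have pr: "partial_r_translation r A f" unfolding partial_r_translation_def r_def using c inj by force
    have "comm_norm D h A f \<le> (SUP (A, f)\<in>{(A, f). partial_r_translation r A f}. comm_norm D h A f)"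
      using pr by (intro SUP_upper2[of "(A, f)"]) auto
    also have "\<dots> < \<infinity>" using H r by blast
    finally show ?thesis .
  qed
  then show "coarse_operator D h" unfolding coarse_operator_def using assms(2,3) by blast
qed


end
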